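(* Let $G=C_2\times C_2\times C_2=\langle n\rangle\times\langle b\rangle\times\langle c\rangle$ and $N=\langle n\rangle$. Let $U=\mathbb{Z}_2^{11}$ (column vectors) with $n,b,c$ acting by the following matrices $A_n,A_b,A_c$ respectively (rows listed top to bottom): $A_n$: (1,0,0,0,0,0,0,0,0,0,0); (0,1,0,0,0,0,0,0,0,0,0); (0,0,1,0,0,0,0,0,0,0,0); (0,0,0,1,0,0,0,0,0,0,0); (0,1,0,0,1,0,0,1,1,1,1); (0,1,0,0,0,1,0,1,1,1,1); (0,−1,0,0,0,0,1,−1,−1,−1,−1); (0,−1,0,0,0,0,0,−1,0,0,0); (0,0,−1,1,0,0,0,0,−1,0,0); (0,−1,1,0,0,0,0,0,0,−1,0); (0,0,0,−1,0,0,0,0,0,0,−1). $A_b$: (1,0,0,0,0,0,0,0,0,0,0); (0,1,0,0,0,0,0,0,0,0,0); (0,0,1,0,0,0,0,0,0,0,0); (0,0,0,1,0,0,0,0,0,0,0); (0,0,0,1,0,1,0,0,0,1,1); (0,1,−1,0,1,0,0,0,0,1,1); (1,0,1,−1,−1,−1,−1,0,0,−1,−1); (0,0,0,0,0,0,0,1,0,0,0); (0,0,0,0,0,0,0,0,1,0,0); (0,−1,1,0,0,0,0,0,0,−1,0); (0,0,0,−1,0,0,0,0,0,0,−1). $A_c$: (1,0,0,0,0,0,0,0,0,0,0); (0,1,0,0,0,0,0,0,0,0,0); (0,0,1,0,0,0,0,0,0,0,0); (0,0,0,1,0,0,0,0,0,0,0); (0,0,0,1,0,0,1,−1,0,−1,0);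 (1,1,0,0,−1,−1,−1,−1,0,−1,0); (0,0,0,−1,1,0,0,1,0,1,0); (0,0,0,0,0,0,0,1,0,0,0); (0,0,−1,1,0,0,0,0,−1,0,0); (0,0,0,0,0,0,0,0,0,1,0); (0,0,0,−1,0,0,0,0,0,0,−1). Then this defines a $\mathbb{Z}_2G$-lattice $U$ such that $U^N$ and $U_N$ are permutation $\mathbb{Z}_2[G/N]$-modules, but $U$ is not a permutation $\mathbb{Z}_2G$-module.
   Context: A $\mathbb{Z}_2G$-lattice is a $\mathbb{Z}_2G$-module free of finite rank over the $2$-adic integers $\mathbb{Z}_2$; it is a permutation module if it has a $\mathbb{Z}_2$-basis that is set-wise preserved by the group. For a module $U$, $U^N=\{u\in U:nu=u\}$ and $U_N=U/I_NU$, where $I_N$ is the augmentation ideal of $\mathbb{Z}_2N$ (so $U_N=U/(1-n)U$); both are $\mathbb{Z}_2[G/N]$-modules. *)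

theory Defs
  imports "HOL-Analysis.Analysis" "HOL-Library.Numeral_Type" "HOL-Number_Theory.Cong"
begin

text \<open>An element of Z_2 is represented by a compatible sequence of integers
  (x_k), with x_m congruent to x_k modulo 2^k whenever k <= m; two such sequences
  are identified when they agree modulo 2^k in every coordinate k.\<close>

definition compat2 :: "(nat \<Rightarrow> int) \<Rightarrow> bool" where
  "compat2 f \<longleftrightarrow> (\<forall>k m. k \<le> m \<longrightarrow> [f m = f k] (mod 2 ^ k))"

definition padic2_rel :: "(nat \<Rightarrow> int) \<Rightarrow> (nat \<Rightarrow> int) \<Rightarrow> bool" where
  "padic2_rel f g \<longleftrightarrow> compat2 f \<and> compat2 g \<and> (\<forall>k. [f k = g k] (mod 2 ^ k))"

lemma padic2_rel_part_equivp: "part_equivp padic2_rel"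
proof (rule part_equivpI)
  show "\<exists>x. padic2_rel x x"
    by (rule exI[of _ "\<lambda>k. 0"]) (simp add: padic2_rel_def compat2_def)
  show "symp padic2_rel"
    by (auto simp: symp_def padic2_rel_def cong_sym)
  show "transp padic2_rel"
    by (auto simp: transp_def padic2_rel_def intro: cong_trans)
qed

quotient_type padic2 = "nat \<Rightarrow> int" / partial: padic2_rel
  by (rule padic2_rel_part_equivp)

lemma compat2_const: "compat2 (\<lambda>k. c)"
  by (simp add: compat2_def)

lemma compat2_add: "compat2 f \<Longrightarrow> compat2 g \<Longrightarrow> compat2 (\<lambda>k. f k + g k)"
  by (auto simp: compat2_def intro: cong_add)

lemma compat2_mult: "compat2 f \<Longrightarrow> compat2 g \<Longrightarrow> compat2 (\<lambda>k. f k * g k)"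
  by (auto simp: compat2_def intro: cong_mult)

lemma compat2_uminus: "compat2 f \<Longrightarrow> compat2 (\<lambda>k. - f k)"
  by (auto simp: compat2_def intro: cong_minus_minus_iff[THEN iffD2])

lemma compat2_diff: "compat2 f \<Longrightarrow> compat2 g \<Longrightarrow> compat2 (\<lambda>k. f k - g k)"
  by (auto simp: compat2_def intro: cong_diff)

instantiation padic2 :: comm_ring_1
begin

lift_definition zero_padic2 :: padic2 is "\<lambda>k. 0"
  by (simp add: padic2_rel_def compat2_const)

lift_definition one_padic2 :: padic2 is "\<lambda>k. 1"
  by (simp add: padic2_rel_def compat2_const)

lift_definition plus_padic2 :: "padic2 \<Rightarrow> padic2 \<Rightarrow> padic2" is "\<lambda>f g k. f k + g k"
  by (auto simp: padic2_rel_def compat2_add intro: cong_add)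

lift_definition times_padic2 :: "padic2 \<Rightarrow> padic2 \<Rightarrow> padic2" is "\<lambda>f g k. f k * g k"
  by (auto simp: padic2_rel_def compat2_mult intro: cong_mult)

lift_definition uminus_padic2 :: "padic2 \<Rightarrow> padic2" is "\<lambda>f k. - f k"
  by (auto simp: padic2_rel_def compat2_uminus intro: cong_minus_minus_iff[THEN iffD2])

lift_definition minus_padic2 :: "padic2 \<Rightarrow> padic2 \<Rightarrow> padic2" is "\<lambda>f g k. f k - g k"
  by (auto simp: padic2_rel_def compat2_diff intro: cong_diff)

instance
proof
  fix a b c :: padic2
  show "a + b + c = a + (b + c)"
    by transfer (auto simp: padic2_rel_def compat2_add add.assoc)
  show "a + b = b + a"
    by transfer (auto simp: padic2_rel_def compat2_add add.commute)
  show "0 + a = a"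
    by transfer (auto simp: padic2_rel_def)
  show "- a + a = 0"
    by transfer (auto simp: padic2_rel_def compat2_add compat2_uminus compat2_const)
  show "a - b = a + - b"
    by transfer (auto simp: padic2_rel_def compat2_add compat2_diff compat2_uminus)
  show "a * b * c = a * (b * c)"
    by transfer (auto simp: padic2_rel_def compat2_mult mult.assoc)
  show "a * b = b * a"
    by transfer (auto simp: padic2_rel_def compat2_mult mult.commute)
  show "1 * a = a"
    by transfer (auto simp: padic2_rel_def)
  show "(a + b) * c = a * c + b * c"
    by transfer (auto simp: padic2_rel_def compat2_mult compat2_add distrib_right)
  show "(0::padic2) \<noteq> 1"
  proof transfer
    have "\<not> [0 = 1] (mod (2::int) ^ 1)" by (simp add: cong_def)
    then show "\<not> padic2_rel (\<lambda>k. 0) (\<lambda>k. 1)" unfolding padic2_rel_def by blast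
  qed
qed

end

definition intmat :: "int list list \<Rightarrow> 'a::ring_1 ^ 'n::{finite,one,plus} ^ 'm::{finite,one,plus}" where
  "intmat L = vector (map (\<lambda>r. vector (map of_int r)) L)"

definition lincombs :: "('a::comm_ring_1 ^ 'n) set \<Rightarrow> ('a ^ 'n) set" where
  "lincombs B = {x. \<exists>S c. finite S \<and> S \<subseteq> B \<and> x = (\<Sum>v\<in>S. c v *s v)}"

text \<open>perm_basis Gs M W B: the classes modulo the submodule W of the
  (finite) set B of elements of the module M form a Z_2-basis of M/W (they span M
  modulo W and are linearly independent modulo W), and this set of classes is
  set-wise preserved by every map in Gs.  With W = {0} this is just a Z_2-basis
  of M set-wise preserved by Gs.\<close>
definition perm_basis :: "(('a::comm_ring_1 ^ 'n) \<Rightarrow> ('a ^ 'n)) set \<Rightarrow> ('a ^ 'n) set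
    \<Rightarrow> ('a ^ 'n) set \<Rightarrow> ('a ^ 'n) set \<Rightarrow> bool" where
  "perm_basis Gs M W B \<longleftrightarrow>
     finite B \<and> B \<subseteq> M \<and>
     (\<forall>x\<in>M. \<exists>y\<in>lincombs B. x - y \<in> W) \<and>
     (\<forall>S c. finite S \<and> S \<subseteq> B \<and> (\<Sum>v\<in>S. c v *s v) \<in> W \<longrightarrow> (\<forall>v\<in>S. c v = 0)) \<and>
     (\<forall>g\<in>Gs. \<forall>v\<in>B. \<exists>w\<in>B. g v - w \<in> W)"

definition is_perm_module :: "(('a::comm_ring_1 ^ 'n) \<Rightarrow> ('a ^ 'n)) set \<Rightarrow> ('a ^ 'n) set
    \<Rightarrow> ('a ^ 'n) set \<Rightarrow> bool" where
  "is_perm_module Gs M W \<longleftrightarrow> (\<exists>B. perm_basis Gs M W B)"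

definition A_n :: "padic2 ^ 11 ^ 11" where
  "A_n = intmat
    [[1,0,0,0,0,0,0,0,0,0,0],
     [0,1,0,0,0,0,0,0,0,0,0],
     [0,0,1,0,0,0,0,0,0,0,0],
     [0,0,0,1,0,0,0,0,0,0,0],
     [0,1,0,0,1,0,0,1,1,1,1],
     [0,1,0,0,0,1,0,1,1,1,1],
     [0,-1,0,0,0,0,1,-1,-1,-1,-1],
     [0,-1,0,0,0,0,0,-1,0,0,0],
     [0,0,-1,1,0,0,0,0,-1,0,0],
     [0,-1,1,0,0,0,0,0,0,-1,0],
     [0,0,0,-1,0,0,0,0,0,0,-1]]"

definition A_b :: "padic2 ^ 11 ^ 11" where
  "A_b = intmat
    [[1,0,0,0,0,0,0,0,0,0,0],
     [0,1,0,0,0,0,0,0,0,0,0],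
     [0,0,1,0,0,0,0,0,0,0,0],
     [0,0,0,1,0,0,0,0,0,0,0],
     [0,0,0,1,0,1,0,0,0,1,1],
     [0,1,-1,0,1,0,0,0,0,1,1],
     [1,0,1,-1,-1,-1,-1,0,0,-1,-1],
     [0,0,0,0,0,0,0,1,0,0,0],
     [0,0,0,0,0,0,0,0,1,0,0],
     [0,-1,1,0,0,0,0,0,0,-1,0],
     [0,0,0,-1,0,0,0,0,0,0,-1]]"

definition A_c :: "padic2 ^ 11 ^ 11" where
  "A_c = intmat
    [[1,0,0,0,0,0,0,0,0,0,0],
     [0,1,0,0,0,0,0,0,0,0,0],
     [0,0,1,0,0,0,0,0,0,0,0],
     [0,0,0,1,0,0,0,0,0,0,0],
     [0,0,0,1,0,0,1,-1,0,-1,0],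
     [1,1,0,0,-1,-1,-1,-1,0,-1,0],
     [0,0,0,-1,1,0,0,1,0,1,0],
     [0,0,0,0,0,0,0,1,0,0,0],
     [0,0,-1,1,0,0,0,0,-1,0,0],
     [0,0,0,0,0,0,0,0,0,1,0],
     [0,0,0,-1,0,0,0,0,0,0,-1]]"

text \<open>G = C_2 x C_2 x C_2, an element n^i b^j c^k recorded by its exponent triple
  (i,j,k) of booleans, acting on U = Z_2^11 via A_n^i A_b^j A_c^k.\<close>
definition rho :: "bool \<times> bool \<times> bool \<Rightarrow> padic2 ^ 11 ^ 11" where
  "rho g = (case g of (i, j, k) \<Rightarrow>
     (if i then A_n else mat 1) ** (if j then A_b else mat 1) ** (if k then A_c else mat 1))"

definition G_action :: "(padic2 ^ 11 \<Rightarrow> padic2 ^ 11) set" where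
  "G_action = {(\<lambda>u. rho g *v u) | g. True}"

definition U_fixed_N :: "(padic2 ^ 11) set" where
  "U_fixed_N = {u. A_n *v u = u}"

definition IN_U :: "(padic2 ^ 11) set" where
  "IN_U = {u - A_n *v u | u. True}"

end

theory Submission
  imports Defs
begin

definition phi :: "nat \<Rightarrow> 11" where "phi k = of_nat (Suc k)"

lemma lt11: "(k::nat) < 11 \<longleftrightarrow> k = 0 \<or> k = 1 \<or> k = 2 \<or> k = 3 \<or> k = 4 \<or> k = 5 \<or> k = 6 \<or> k = 7 \<or> k = 8 \<or> k = 9 \<or> k = 10"
  by presburger

lemma phi_inj: "inj_on phi {..<11}"
  unfolding inj_on_def Ball_def lessThan_iff lt11 by (auto simp: phi_def)

lemma UNIV11: "(UNIV::11 set) = phi ` {..<11}"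
proof -
  have "card (phi ` {..<11}) = 11" using phi_inj by (simp add: card_image)
  then show ?thesis using card_subset_eq[of "UNIV::11 set" "phi ` {..<11}"] by simp
qed

lemma all11: "(\<forall>i::11. P i) \<longleftrightarrow> (\<forall>k<11. P (phi k))"
  using UNIV11 by (metis UNIV_I imageE lessThan_iff)

lemma sum11: "sum f (UNIV::11 set) = (\<Sum>k<11. f (phi k))"
  by (simp add: UNIV11 sum.reindex[OF phi_inj])

lemma vec_eq11: "(\<And>i. i < 11 \<Longrightarrow> (x::'a^11) $ phi i = y $ phi i) \<Longrightarrow> x = y"
  unfolding vec_eq_iff using all11[of "\<lambda>i. x $ i = y $ i"] by blast

lemma mat_eq11: "(\<And>i j. i < 11 \<Longrightarrow> j < 11 \<Longrightarrow> (x::'a^11^11) $ phi i $ phi j = y $ phi i $ phi j) \<Longrightarrow> x = y"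
  by (rule vec_eq11, rule vec_eq11) blast

lemma len11: "length l = 11 \<Longrightarrow> \<exists>a0 a1 a2 a3 a4 a5 a6 a7 a8 a9 a10. l = [a0,a1,a2,a3,a4,a5,a6,a7,a8,a9,a10]"
  by (simp add: numeral_eq_Suc length_Suc_conv) blast

lemma vector_phi: assumes "length l = 11" "k < 11"
  shows "(vector l :: 'a::zero^11) $ phi k = l ! k"
proof -
  obtain a0 a1 a2 a3 a4 a5 a6 a7 a8 a9 a10 where l: "l = [a0,a1,a2,a3,a4,a5,a6,a7,a8,a9,a10]"
    using len11[OF assms(1)] by blast
  show ?thesis using assms(2) unfolding l lt11
    by (elim disjE) (simp_all add: phi_def vector_def)
qed

definition wf11 :: "int list list \<Rightarrow> bool" where
  "wf11 L \<longleftrightarrow> length L = 11 \<and> (\<forall>r\<in>set L. length r = 11)"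

definition ivec :: "int list \<Rightarrow> padic2^11" where "ivec v = vector (map of_int v)"

definition lsum :: "(nat \<Rightarrow> int) \<Rightarrow> int" where "lsum f = sum_list (map f [0..<11])"

lemma lsum_eq: "lsum f = (\<Sum>k<11. f k)"
  unfolding lsum_def by (simp add: sum_set_upt_conv_sum_list_nat[symmetric] atLeast0LessThan)

definition lmm :: "int list list \<Rightarrow> int list list \<Rightarrow> int list list" where
  "lmm L M = map (\<lambda>i. map (\<lambda>j. lsum (\<lambda>k. L!i!k * M!k!j)) [0..<11]) [0..<11]"

definition lmv :: "int list list \<Rightarrow> int list \<Rightarrow> int list" where
  "lmv L v = map (\<lambda>i. lsum (\<lambda>k. L!i!k * v!k)) [0..<11]"

definition ladd :: "int list list \<Rightarrow> int list list \<Rightarrow> int list list" where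
  "ladd L M = map (\<lambda>i. map (\<lambda>j. L!i!j + M!i!j) [0..<11]) [0..<11]"

definition lid :: "int list list" where
  "lid = map (\<lambda>i. map (\<lambda>j. if i = j then 1 else 0) [0..<11]) [0..<11]"

lemma wf11_gen: "wf11 (map (\<lambda>i. map (f i) [0..<11]) [0..<11])"
  by (simp add: wf11_def)

lemma wf_lmm: "wf11 (lmm L M)" by (simp add: lmm_def wf11_gen)
lemma wf_ladd: "wf11 (ladd L M)" by (simp add: ladd_def wf11_gen)
lemma wf_lid: "wf11 lid" by (simp add: lid_def wf11_gen)

lemma ivec_phi: "length v = 11 \<Longrightarrow> k < 11 \<Longrightarrow> ivec v $ phi k = of_int (v!k)"
  unfolding ivec_def by (simp add: vector_phi)

lemma intmat_phi: assumes "wf11 L" "i < 11" "j < 11"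
  shows "(intmat L :: padic2^11^11) $ phi i $ phi j = of_int (L!i!j)"
proof -
  have "(intmat L :: padic2^11^11) $ phi i = vector (map of_int (L!i))"
    unfolding intmat_def using assms by (simp add: vector_phi wf11_def)
  also have "\<dots> $ phi j = of_int (L!i!j)"
    using assms by (simp add: vector_phi wf11_def)
  finally show ?thesis .
qed

lemma intmat_mult: assumes "wf11 L" "wf11 M"
  shows "(intmat L :: padic2^11^11) ** (intmat M :: padic2^11^11) = intmat (lmm L M)"
proof -
  have "((intmat L :: padic2^11^11) ** (intmat M :: padic2^11^11)) $ phi i $ phi j = intmat (lmm L M) $ phi i $ phi j"
    if "i < 11" "j < 11" for i j
  proof -
    have "((intmat L :: padic2^11^11) ** (intmat M :: padic2^11^11)) $ phi i $ phi j
        = (\<Sum>k<11. (intmat L :: padic2^11^11) $ phi i $ phi k * (intmat M :: padic2^11^11) $ phi k $ phi j)"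
      unfolding matrix_matrix_mult_def by simp (rule sum11)
    also have "\<dots> = (\<Sum>k<11. of_int (L!i!k * M!k!j))"
      by (rule sum.cong) (simp_all add: intmat_phi assms that)
    also have "\<dots> = intmat (lmm L M) $ phi i $ phi j"
      using that by (simp add: intmat_phi wf_lmm lsum_eq) (simp add: lmm_def lsum_eq)
    finally show ?thesis .
  qed
  then show ?thesis by - (rule mat_eq11, blast)
qed

lemma intmat_add: assumes "wf11 L" "wf11 M"
  shows "(intmat L :: padic2^11^11) + intmat M = intmat (ladd L M)"
proof -
  have "(intmat L + intmat M :: padic2^11^11) $ phi i $ phi j = intmat (ladd L M) $ phi i $ phi j"
    if "i < 11" "j < 11" for i j
    using that assms by (simp add: intmat_phi wf_ladd) (simp add: ladd_def)
  then show ?thesis by - (rule mat_eq11, blast)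
qed

lemma intmat_lid: "(intmat lid :: padic2^11^11) = mat 1"
proof -
  have "(intmat lid :: padic2^11^11) $ phi i $ phi j = mat 1 $ phi i $ phi j"
    if "i < 11" "j < 11" for i j
    using that inj_onD[OF phi_inj, of i j] by (simp add: intmat_phi wf_lid mat_def) (auto simp: lid_def)
  then show ?thesis by - (rule mat_eq11, blast)
qed

lemma intmat_mv: assumes "wf11 L" "length v = 11"
  shows "(intmat L :: padic2^11^11) *v ivec v = ivec (lmv L v)"
proof -
  have "(intmat L *v ivec v) $ phi i = ivec (lmv L v) $ phi i" if "i < 11" for i
  proof -
    have "(intmat L *v ivec v) $ phi i = (\<Sum>k<11. (intmat L :: padic2^11^11) $ phi i $ phi k * ivec v $ phi k)"
      by (simp add: matrix_vector_mult_def sum11)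
    also have "\<dots> = (\<Sum>k<11. of_int (L!i!k * v!k))"
      by (rule sum.cong) (simp_all add: intmat_phi ivec_phi assms that)
    also have "\<dots> = ivec (lmv L v) $ phi i"
      using that by (simp add: ivec_phi lmv_def lsum_eq)
    finally show ?thesis .
  qed
  then show ?thesis by - (rule vec_eq11, blast)
qed


definition dot :: "padic2^11 \<Rightarrow> padic2^11 \<Rightarrow> padic2" where
  "dot p x = (\<Sum>i\<in>UNIV. p$i * x$i)"

lemma dot_add: "dot p (x + y) = dot p x + dot p y"
  by (simp add: dot_def distrib_left sum.distrib)
lemma dot_diff: "dot p (x - y) = dot p x - dot p y"
  by (simp add: dot_def right_diff_distrib sum_subtractf)
lemma dot_scale: "dot p (a *s x) = a * dot p x"
  by (simp add: dot_def sum_distrib_left mult.left_commute)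
lemma dot_zero: "dot p 0 = 0"
  by (simp add: dot_def)
lemma dot_sum: "dot p (sum f S) = (\<Sum>v\<in>S. dot p (f v))"
proof (cases "finite S")
  case True then show ?thesis
    by (induction S rule: finite_induct) (simp_all add: dot_zero dot_add)
next
  case False then show ?thesis by (simp add: dot_zero)
qed

definition col :: "nat \<Rightarrow> int list list \<Rightarrow> int list" where
  "col k V = map (\<lambda>r. r!k) V"

definition lvm :: "int list \<Rightarrow> int list list \<Rightarrow> int list" where
  "lvm r L = map (\<lambda>j. lsum (\<lambda>k. r!k * L!k!j)) [0..<11]"

lemma length_col: "wf11 V \<Longrightarrow> length (col k V) = 11"
  by (simp add: col_def wf11_def)
lemma nth_col: "wf11 V \<Longrightarrow> i < 11 \<Longrightarrow> col k V ! i = V!i!k"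
  by (simp add: col_def wf11_def)
lemma length_row: "wf11 V \<Longrightarrow> i < 11 \<Longrightarrow> length (V!i) = 11"
  by (simp add: wf11_def)

lemma dot_ivec: assumes "length r = 11" "length v = 11"
  shows "dot (ivec r) (ivec v) = of_int (lsum (\<lambda>k. r!k * v!k))"
  unfolding dot_def sum11 lsum_eq of_int_sum
  by (rule sum.cong) (simp_all add: ivec_phi assms)

lemma dot_col: assumes "wf11 P" "wf11 V" "j < 11" "k < 11"
  shows "dot (ivec (P!j)) (ivec (col k V)) = of_int (lmm P V ! j ! k)"
  using assms by (simp add: dot_ivec length_row length_col nth_col lmm_def lsum_eq)

lemma lmv_col: assumes "wf11 L" "wf11 V" "k < 11"
  shows "lmv L (col k V) = col k (lmm L V)"
  using assms by (intro nth_equalityI) (simp_all add: lmv_def col_def lmm_def wf11_def lsum_eq)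

lemma mv_col: assumes "wf11 L" "wf11 V" "k < 11"
  shows "(intmat L :: padic2^11^11) *v ivec (col k V) = ivec (col k (lmm L V))"
  using assms by (simp add: intmat_mv length_col lmv_col)

lemma dot_mv_col: assumes "wf11 P" "wf11 L" "wf11 V" "j < 11" "k < 11"
  shows "dot (ivec (P!j)) ((intmat L :: padic2^11^11) *v ivec (col k V)) = of_int (lmm P (lmm L V) ! j ! k)"
  using assms by (simp add: mv_col dot_col wf_lmm)

lemma dot_phi: "dot p x = (\<Sum>t<11. p $ phi t * x $ phi t)"
  unfolding dot_def by (rule sum11)

lemma VP_apply: assumes V: "wf11 V" and P: "wf11 P" and m: "m \<le> 11"
  and zero: "\<And>i k. i < 11 \<Longrightarrow> m \<le> k \<Longrightarrow> k < 11 \<Longrightarrow> V!i!k = 0"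
  shows "((intmat V :: padic2^11^11) ** intmat P) *v x = (\<Sum>k<m. dot (ivec (P!k)) x *s ivec (col k V))"
proof (rule vec_eq11)
  fix i :: nat assume i: "i < 11"
  have "(((intmat V :: padic2^11^11) ** intmat P) *v x) $ phi i = (intmat (lmm V P) *v x) $ phi i"
    by (simp add: intmat_mult V P)
  also have "\<dots> = (\<Sum>t<11. of_int (\<Sum>k<11. V!i!k * P!k!t) * x $ phi t)"
    unfolding matrix_vector_mult_def vec_lambda_beta sum11
    by (rule sum.cong) (simp_all add: intmat_phi wf_lmm i, simp add: lmm_def lsum_eq i)
  also have "\<dots> = (\<Sum>t<11. \<Sum>k<11. of_int (V!i!k) * (of_int (P!k!t) * x $ phi t))"
    by (simp add: of_int_sum sum_distrib_right mult.assoc)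
  also have "\<dots> = (\<Sum>k<11. of_int (V!i!k) * dot (ivec (P!k)) x)"
    by (subst sum.swap) (simp add: dot_phi sum_distrib_left ivec_phi length_row P)
  also have "\<dots> = (\<Sum>k<m. of_int (V!i!k) * dot (ivec (P!k)) x)"
    using m zero i by (intro sum.mono_neutral_right) auto
  also have "\<dots> = (\<Sum>k<m. dot (ivec (P!k)) x *s ivec (col k V)) $ phi i"
    using m i by (simp add: ivec_phi length_col nth_col V mult.commute)
  finally show "(((intmat V :: padic2^11^11) ** intmat P) *v x) $ phi i =
     (\<Sum>k<m. dot (ivec (P!k)) x *s ivec (col k V)) $ phi i" .
qed


definition permok :: "int list list \<Rightarrow> nat \<Rightarrow> bool" where
  "permok X m \<longleftrightarrow> (\<forall>k<m. \<exists>l<m. \<forall>j<m. X!j!k = (if j = l then 1 else 0))"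

lemma perm_basis_cert:
  fixes V P :: "int list list" and m :: nat and M W :: "(padic2^11) set"
    and Gs :: "(padic2^11 \<Rightarrow> padic2^11) set"
  assumes V: "wf11 V" and P: "wf11 P" and m: "m \<le> 11"
  and zero: "\<And>i k. i < 11 \<Longrightarrow> m \<le> k \<Longrightarrow> k < 11 \<Longrightarrow> V!i!k = 0"
  and dual: "\<And>j k. j < m \<Longrightarrow> k < m \<Longrightarrow> lmm P V ! j ! k = (if j = k then 1 else 0)"
  and BM: "\<And>k. k < m \<Longrightarrow> ivec (col k V) \<in> M"
  and killW: "\<And>w j. w \<in> W \<Longrightarrow> j < m \<Longrightarrow> dot (ivec (P!j)) w = 0"
  and span: "\<And>x. x \<in> M \<Longrightarrow> x - ((intmat V :: padic2^11^11) ** intmat P) *v x \<in> W"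
  and Gs: "\<And>g. g \<in> Gs \<Longrightarrow> \<exists>R. wf11 R \<and> g = (\<lambda>u. (intmat R :: padic2^11^11) *v u) \<and> permok (lmm P (lmm R V)) m"
  and GM: "\<And>g x. g \<in> Gs \<Longrightarrow> x \<in> M \<Longrightarrow> g x \<in> M"
  shows "perm_basis Gs M W ((\<lambda>k. ivec (col k V)) ` {..<m})"
proof -
  define \<beta> where "\<beta> k = ivec (col k V)" for k
  define \<pi> where "\<pi> k = ivec (P!k)" for k
  have dotb: "dot (\<pi> j) (\<beta> k) = (if j = k then 1 else 0)" if "j < m" "k < m" for j k
    using that m by (simp add: \<pi>_def \<beta>_def dot_col V P dual)
  have inj: "inj_on \<beta> {..<m}"
  proof (rule inj_onI)
    fix j k assume jk: "j \<in> {..<m}" "k \<in> {..<m}" "\<beta> j = \<beta> k"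
    then have "dot (\<pi> j) (\<beta> j) = dot (\<pi> j) (\<beta> k)" by simp
    with jk show "j = k" using dotb[of j j] dotb[of j k] by (auto split: if_splits)
  qed
  have VPx: "((intmat V :: padic2^11^11) ** intmat P) *v x = (\<Sum>k<m. dot (\<pi> k) x *s \<beta> k)" for x
    unfolding \<pi>_def \<beta>_def by (rule VP_apply[OF V P m zero])
  let ?B = "\<beta> ` {..<m}"
  have dotB: "dot (\<pi> j) v = (if v = \<beta> j then 1 else 0)" if "j < m" "v \<in> ?B" for j v
  proof -
    from that obtain l where l: "l < m" "v = \<beta> l" by auto
    then show ?thesis using dotb[OF that(1) l(1)] inj_onD[OF inj, of j l] that(1) by auto
  qed
  have "finite ?B" by simp
  moreover have "?B \<subseteq> M" using BM unfolding \<beta>_def by auto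
  moreover have "\<forall>x\<in>M. \<exists>y\<in>lincombs ?B. x - y \<in> W"
  proof
    fix x assume x: "x \<in> M"
    define c where "c v = dot (\<pi> (inv_into {..<m} \<beta> v)) x" for v
    have "(\<Sum>v\<in>?B. c v *s v) = (\<Sum>k<m. c (\<beta> k) *s \<beta> k)"
      by (rule sum.reindex[OF inj, unfolded comp_def])
    also have "\<dots> = (\<Sum>k<m. dot (\<pi> k) x *s \<beta> k)"
      by (rule sum.cong) (simp_all add: c_def inv_into_f_f[OF inj])
    finally have "(\<Sum>k<m. dot (\<pi> k) x *s \<beta> k) \<in> lincombs ?B"
      unfolding lincombs_def by (intro CollectI exI[of _ ?B] exI[of _ c]) simp
    then show "\<exists>y\<in>lincombs ?B. x - y \<in> W" using span[OF x] unfolding VPx by blast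
  qed
  moreover have "\<forall>S c. finite S \<and> S \<subseteq> ?B \<and> (\<Sum>v\<in>S. c v *s v) \<in> W \<longrightarrow> (\<forall>v\<in>S. c v = 0)"
  proof (intro allI impI ballI)
    fix S c v assume H: "finite S \<and> S \<subseteq> ?B \<and> (\<Sum>v\<in>S. c v *s v) \<in> W" and v: "v \<in> S"
    then obtain j where j: "j < m" "v = \<beta> j" by auto
    have "0 = dot (\<pi> j) (\<Sum>v\<in>S. c v *s v)" using killW H j unfolding \<pi>_def by auto
    also have "\<dots> = (\<Sum>u\<in>S. c u * (if u = \<beta> j then 1 else 0))"
      unfolding dot_sum dot_scale using H j by (intro sum.cong) (auto simp: dotB)
    also have "\<dots> = c v" using H v j by (simp add: if_distrib cong: if_cong)
    finally show "c v = 0" by simp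
  qed
  moreover have "\<forall>g\<in>Gs. \<forall>v\<in>?B. \<exists>w\<in>?B. g v - w \<in> W"
  proof (intro ballI)
    fix g v assume g: "g \<in> Gs" and v: "v \<in> ?B"
    then obtain k where k: "k < m" "v = \<beta> k" by auto
    obtain R where R: "wf11 R" "g = (\<lambda>u. (intmat R :: padic2^11^11) *v u)" "permok (lmm P (lmm R V)) m"
      using Gs[OF g] by blast
    obtain l where l: "l < m" "\<And>j. j < m \<Longrightarrow> lmm P (lmm R V) ! j ! k = (if j = l then 1 else 0)"
      using R(3) k unfolding permok_def by blast
    have gM: "g v \<in> M" using GM[OF g] BM k unfolding \<beta>_def by auto
    have "(\<Sum>j<m. dot (\<pi> j) (g v) *s \<beta> j) = (\<Sum>j<m. (if j = l then 1 else 0) *s \<beta> j)"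
      using k m by (intro sum.cong) (simp_all add: R(2) \<pi>_def \<beta>_def dot_mv_col P R(1) V l(2))
    also have "\<dots> = (\<Sum>j<m. if j = l then \<beta> j else 0)" by (rule sum.cong) auto
    also have "\<dots> = \<beta> l" using l(1) by simp
    finally have "g v - \<beta> l \<in> W" using span[OF gM] unfolding VPx by simp
    then show "\<exists>w\<in>?B. g v - w \<in> W" using l(1) by blast
  qed
  ultimately show ?thesis unfolding perm_basis_def \<beta>_def[symmetric] by blast
qed


lemma dot_mv_row: assumes P: "wf11 P" and L: "wf11 L" and j: "j < 11"
  shows "dot (ivec (P!j)) ((intmat L :: padic2^11^11) *v x) = dot (ivec (lmm P L ! j)) x"
proof -
  have "dot (ivec (P!j)) ((intmat L :: padic2^11^11) *v x)
      = (\<Sum>t<11. of_int (P!j!t) * (\<Sum>s<11. of_int (L!t!s) * x $ phi s))"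
    unfolding dot_phi matrix_vector_mult_def vec_lambda_beta sum11
    by (rule sum.cong) (simp_all add: ivec_phi length_row P j intmat_phi L)
  also have "\<dots> = (\<Sum>s<11. (\<Sum>t<11. of_int (P!j!t) * of_int (L!t!s)) * x $ phi s)"
    unfolding sum_distrib_left sum_distrib_right mult.assoc by (rule sum.swap)
  also have "\<dots> = dot (ivec (lmm P L ! j)) x"
    unfolding dot_phi
    by (rule sum.cong) (simp_all add: ivec_phi wf_lmm length_row j, simp add: lmm_def lsum_eq j of_int_sum)
  finally show ?thesis .
qed

definition zerob :: "int list list \<Rightarrow> nat \<Rightarrow> bool" where
  "zerob V m = list_all (\<lambda>i. list_all (\<lambda>k. V!i!k = 0) [m..<11]) [0..<11]"
definition dualb :: "int list list \<Rightarrow> int list list \<Rightarrow> nat \<Rightarrow> bool" where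
  "dualb P V m = (let X = lmm P V in list_all (\<lambda>j. list_all (\<lambda>k. X ! j ! k = (if j = k then 1 else 0)) [0..<m]) [0..<m])"
definition permokb :: "int list list \<Rightarrow> nat \<Rightarrow> bool" where
  "permokb X m = list_all (\<lambda>k. list_ex (\<lambda>l. list_all (\<lambda>j. X!j!k = (if j = l then 1 else 0)) [0..<m]) [0..<m]) [0..<m]"

lemma zerobD: "zerob V m \<Longrightarrow> i < 11 \<Longrightarrow> m \<le> k \<Longrightarrow> k < 11 \<Longrightarrow> V!i!k = 0"
  by (simp add: zerob_def list_all_iff)
lemma dualbD: "dualb P V m \<Longrightarrow> j < m \<Longrightarrow> k < m \<Longrightarrow> lmm P V ! j ! k = (if j = k then 1 else 0)"
  unfolding dualb_def Let_def list_all_iff by auto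
lemma permokbD: "permokb X m \<Longrightarrow> permok X m"
  unfolding permokb_def permok_def list_all_iff list_ex_iff by fastforce

definition "LAn = [[1,0,0,0,0,0,0,0,0,0,0],
     [0,1,0,0,0,0,0,0,0,0,0],
     [0,0,1,0,0,0,0,0,0,0,0],
     [0,0,0,1,0,0,0,0,0,0,0],
     [0,1,0,0,1,0,0,1,1,1,1],
     [0,1,0,0,0,1,0,1,1,1,1],
     [0,-1,0,0,0,0,1,-1,-1,-1,-1],
     [0,-1,0,0,0,0,0,-1,0,0,0],
     [0,0,-1,1,0,0,0,0,-1,0,0],
     [0,-1,1,0,0,0,0,0,0,-1,0],
     [0,0,0,-1,0,0,0,0,0,0,-1::int]]"

lemma An_eq: "A_n = intmat LAn" unfolding A_n_def LAn_def by simp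
lemma wf_Ln: "wf11 LAn" by (simp add: LAn_def wf11_def)

definition "LAb = ([[1,0,0,0,0,0,0,0,0,0,0],
  [0,1,0,0,0,0,0,0,0,0,0],
  [0,0,1,0,0,0,0,0,0,0,0],
  [0,0,0,1,0,0,0,0,0,0,0],
  [0,0,0,1,0,1,0,0,0,1,1],
  [0,1,-1,0,1,0,0,0,0,1,1],
  [1,0,1,-1,-1,-1,-1,0,0,-1,-1],
  [0,0,0,0,0,0,0,1,0,0,0],
  [0,0,0,0,0,0,0,0,1,0,0],
  [0,-1,1,0,0,0,0,0,0,-1,0],
  [0,0,0,-1,0,0,0,0,0,0,-1]] :: int list list)"

definition "LAc = ([[1,0,0,0,0,0,0,0,0,0,0],
  [0,1,0,0,0,0,0,0,0,0,0],
  [0,0,1,0,0,0,0,0,0,0,0],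
  [0,0,0,1,0,0,0,0,0,0,0],
  [0,0,0,1,0,0,1,-1,0,-1,0],
  [1,1,0,0,-1,-1,-1,-1,0,-1,0],
  [0,0,0,-1,1,0,0,1,0,1,0],
  [0,0,0,0,0,0,0,1,0,0,0],
  [0,0,-1,1,0,0,0,0,-1,0,0],
  [0,0,0,0,0,0,0,0,0,1,0],
  [0,0,0,-1,0,0,0,0,0,0,-1]] :: int list list)"

definition "V2 = ([[0,0,0,1,1,1,1,0,0,0,0],
  [0,0,-2,0,0,0,0,0,0,0,0],
  [-2,0,-2,0,0,0,0,0,0,0,0],
  [0,2,0,0,0,0,0,0,0,0,0],
  [0,1,-1,0,0,1,0,0,0,0,0],
  [1,0,-1,0,1,0,0,0,0,0,0],
  [-1,-1,0,1,0,0,0,0,0,0,0],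
  [0,0,1,0,0,0,0,0,0,0,0],
  [1,1,1,0,0,0,0,0,0,0,0],
  [-1,0,0,0,0,0,0,0,0,0,0],
  [0,-1,0,0,0,0,0,0,0,0,0]] :: int list list)"

definition "P2 = ([[0,0,0,0,0,0,0,0,0,-1,0],
  [0,0,0,0,0,0,0,-1,1,1,0],
  [0,0,0,0,0,0,0,1,0,0,0],
  [0,0,0,0,0,0,1,-1,1,0,0],
  [0,0,0,0,0,1,0,1,0,1,0],
  [0,0,0,0,1,0,0,2,-1,-1,0],
  [1,0,0,0,-1,-1,-1,-2,0,0,0],
  [0,0,0,0,0,0,0,0,0,0,0],
  [0,0,0,0,0,0,0,0,0,0,0],
  [0,0,0,0,0,0,0,0,0,0,0],
  [0,0,0,0,0,0,0,0,0,0,0]] :: int list list)"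

definition "Psi2 = ([[0,0,0,0,0,0,0,0,0,0,0],
  [0,0,0,0,0,0,0,1,0,0,0],
  [0,0,0,0,0,0,0,1,0,-1,0],
  [0,0,0,0,0,0,0,1,-1,-1,0],
  [0,0,0,0,0,0,0,0,0,0,0],
  [0,0,0,0,0,0,0,0,0,0,0],
  [0,0,0,0,0,0,0,0,0,0,0],
  [0,0,0,0,0,0,0,0,0,0,0],
  [0,0,0,0,0,0,0,0,0,0,0],
  [0,0,0,0,0,0,0,0,0,0,0],
  [0,0,0,0,-1,0,0,-1,0,0,0]] :: int list list)"

definition "V3 = ([[0,1,1,1,1,1,1,0,0,0,0],
  [1,0,0,1,1,1,1,0,0,0,0],
  [0,-1,-1,1,1,0,0,0,0,0,0],
  [1,-1,-1,-1,-1,0,0,0,0,0,0],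
  [0,0,0,1,1,0,1,0,0,0,0],
  [0,1,1,1,2,1,1,0,0,0,0],
  [0,0,0,0,0,0,0,0,0,0,0],
  [1,-1,0,-2,-3,0,-1,0,0,0,0],
  [0,0,0,0,0,0,0,0,0,0,0],
  [0,0,0,0,0,0,0,0,0,0,0],
  [0,0,0,0,0,0,0,0,0,0,0]] :: int list list)"

definition "P3 = ([[-2,2,-1,-1,0,0,0,0,0,0,0],
  [0,1,-1,0,-1,-1,0,-1,-1,-1,-1],
  [-1,0,0,-1,1,1,0,1,1,1,1],
  [0,1,0,-1,0,-1,-1,0,0,0,0],
  [-1,0,0,0,0,1,1,0,0,0,0],
  [2,-1,1,1,-1,0,-1,0,0,0,0],
  [1,-1,0,1,1,0,1,0,0,0,0],
  [0,0,0,0,0,0,0,0,0,0,0],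
  [0,0,0,0,0,0,0,0,0,0,0],
  [0,0,0,0,0,0,0,0,0,0,0],
  [0,0,0,0,0,0,0,0,0,0,0]] :: int list list)"

definition "Lam3 = ([[0,0,0,0,0,0,0,0,0,0,0],
  [0,0,0,0,0,0,0,0,1,1,1],
  [0,0,0,0,0,0,0,0,1,0,1],
  [0,0,0,0,0,0,0,0,0,0,1],
  [0,0,0,0,0,0,0,0,0,0,0],
  [0,0,0,0,0,0,0,0,0,0,0],
  [0,0,0,0,0,0,0,0,0,0,0],
  [0,0,0,0,0,0,1,0,-1,-1,-1],
  [0,0,0,0,0,0,0,0,0,0,0],
  [0,0,0,0,0,0,0,0,0,0,0],
  [0,0,0,0,0,0,0,0,0,0,0]] :: int list list)"

definition "LL = ([[0,0,0,0,2,-2,2,0,0,-4,0],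
  [0,0,0,0,-1,2,-1,0,0,3,0],
  [0,0,0,0,-1,2,-1,0,0,4,0],
  [0,0,0,0,1,-1,0,0,0,-1,0],
  [0,0,0,0,0,0,0,0,0,0,0],
  [0,0,0,0,0,0,0,0,0,0,0],
  [0,0,0,0,0,0,0,0,0,0,0],
  [0,0,0,0,0,0,0,0,0,0,0],
  [0,0,0,0,0,0,0,0,0,0,0],
  [0,0,0,0,0,0,0,0,0,0,0],
  [0,0,0,0,0,0,0,0,0,0,0]] :: int list list)"

definition "Q1 = ([[0,0,0,0,16,0,0,4,8,12,0],
  [0,0,0,0,-16,0,0,-4,-8,-8,0],
  [0,0,0,0,-16,0,0,-4,-8,-12,0],
  [0,0,0,0,8,0,0,4,4,4,0],
  [0,0,0,0,0,0,0,0,0,0,0],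
  [0,0,0,0,0,0,0,0,0,0,0],
  [0,0,0,0,0,0,0,0,0,0,0],
  [0,0,0,0,8,0,0,4,4,4,0],
  [0,0,0,0,12,0,0,4,8,8,0],
  [0,0,0,0,0,0,0,0,0,0,0],
  [0,0,0,0,-8,0,0,-4,-4,-4,0]] :: int list list)"

definition "Q2 = ([[0,0,0,0,-20,0,-4,0,0,0,0],
  [0,0,0,0,16,0,0,0,0,0,0],
  [0,0,0,0,16,0,0,0,0,0,0],
  [0,0,0,0,-8,0,0,0,0,0,0],
  [0,0,0,0,0,0,0,0,0,0,0],
  [0,0,0,0,0,0,0,0,0,0,0],
  [0,0,0,0,0,0,0,0,0,0,0],
  [0,0,0,0,-8,0,0,0,0,0,0],
  [0,0,0,0,-12,0,0,0,0,0,0],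
  [0,0,0,0,0,0,0,0,0,0,0],
  [0,0,0,0,4,0,0,0,0,0,0]] :: int list list)"

definition "Q3 = ([[0,0,0,0,8,0,0,0,0,0,0],
  [0,0,0,0,-8,0,0,0,0,0,0],
  [0,0,0,0,-8,0,0,0,0,0,0],
  [0,0,0,0,0,0,0,0,0,0,0],
  [0,0,0,0,0,0,0,0,0,0,0],
  [0,0,0,0,0,0,0,0,0,0,0],
  [0,0,0,0,0,0,0,0,0,0,0],
  [0,0,0,0,4,0,0,0,0,0,0],
  [0,0,0,0,4,0,0,0,0,0,0],
  [0,0,0,0,0,0,0,0,0,0,0],
  [0,0,0,0,0,0,0,0,0,0,0]] :: int list list)"


lemma Ab_eq: "A_b = intmat LAb" unfolding A_b_def LAb_def by simp
lemma Ac_eq: "A_c = intmat LAc" unfolding A_c_def LAc_def by simp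
lemma wf_Lb: "wf11 LAb" by (simp add: LAb_def wf11_def)
lemma wf_Lc: "wf11 LAc" by (simp add: LAc_def wf11_def)

definition Rl :: "bool \<times> bool \<times> bool \<Rightarrow> int list list" where
  "Rl t = (case t of (i, j, k) \<Rightarrow> lmm (lmm (if i then LAn else lid) (if j then LAb else lid)) (if k then LAc else lid))"

lemma wf_Rl: "wf11 (Rl t)" by (simp add: Rl_def wf_lmm split: prod.splits)

lemma rho_eq: "rho t = intmat (Rl t)"
proof -
  obtain i j k where t: "t = (i, j, k)" by (cases t) auto
  have 1: "(if i then A_n else mat 1) = intmat (if i then LAn else lid)" by (simp add: An_eq intmat_lid)
  have 2: "(if j then A_b else mat 1) = intmat (if j then LAb else lid)" by (simp add: Ab_eq intmat_lid)
  have 3: "(if k then A_c else mat 1) = intmat (if k then LAc else lid)" by (simp add: Ac_eq intmat_lid)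
  have w1: "wf11 (if i then LAn else lid)" by (simp add: wf_Ln wf_lid)
  have w2: "wf11 (if j then LAb else lid)" by (simp add: wf_Lb wf_lid)
  have w3: "wf11 (if k then LAc else lid)" by (simp add: wf_Lc wf_lid)
  show ?thesis unfolding rho_def t Rl_def prod.case 1 2 3
    by (simp add: intmat_mult w1 w2 w3 wf_lmm)
qed

lemma G_action_eq: "g \<in> G_action \<Longrightarrow> \<exists>t. g = (\<lambda>u. (intmat (Rl t) :: padic2^11^11) *v u)"
  unfolding G_action_def by (auto simp: rho_eq)


lemma wf_V2: "wf11 V2" by (simp add: V2_def wf11_def)
lemma wf_P2: "wf11 P2" by (simp add: P2_def wf11_def)
lemma wf_Psi2: "wf11 Psi2" by (simp add: Psi2_def wf11_def)
lemma wf_V3: "wf11 V3" by (simp add: V3_def wf11_def)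
lemma wf_P3: "wf11 P3" by (simp add: P3_def wf11_def)
lemma wf_Lam3: "wf11 Lam3" by (simp add: Lam3_def wf11_def)
lemma wf_LL: "wf11 LL" by (simp add: LL_def wf11_def)
lemma wf_Q1: "wf11 Q1" by (simp add: Q1_def wf11_def)
lemma wf_Q2: "wf11 Q2" by (simp add: Q2_def wf11_def)
lemma wf_Q3: "wf11 Q3" by (simp add: Q3_def wf11_def)

lemmas wfs = wf_Ln wf_Lb wf_Lc wf_lid wf_V2 wf_P2 wf_Psi2 wf_V3 wf_P3 wf_Lam3 wf_LL wf_Q1 wf_Q2 wf_Q3 wf_lmm wf_ladd wf_Rl

lemma comp_nn: "lmm LAn LAn = lid" by code_simp
lemma comp_bb: "lmm LAb LAb = lid" by code_simp
lemma comp_cc: "lmm LAc LAc = lid" by code_simp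
lemma comp_nb: "lmm LAn LAb = lmm LAb LAn" by code_simp
lemma comp_nc: "lmm LAn LAc = lmm LAc LAn" by code_simp
lemma comp_bc: "lmm LAb LAc = lmm LAc LAb" by code_simp

lemma part1: "A_n ** A_n = mat 1 \<and> A_b ** A_b = mat 1 \<and> A_c ** A_c = mat 1 \<and>
         A_n ** A_b = A_b ** A_n \<and> A_n ** A_c = A_c ** A_n \<and> A_b ** A_c = A_c ** A_b"
  by (simp add: An_eq Ab_eq Ac_eq intmat_mult wfs comp_nn comp_bb comp_cc comp_nb comp_nc comp_bc
      flip: intmat_lid)

lemma all8: "(\<forall>t::bool\<times>bool\<times>bool. P t) \<longleftrightarrow> P (True,True,True) \<and> P (True,True,False) \<and> P (True,False,True)
  \<and> P (True,False,False) \<and> P (False,True,True) \<and> P (False,True,False) \<and> P (False,False,True) \<and> P (False,False,False)"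
  by (auto simp: all_bool_eq)

lemma comm_Rl': "lmm LAn (Rl (i,j,k)) = lmm (Rl (i,j,k)) LAn"
  by (induct i; induct j; induct k; simp only: Rl_def prod.case if_True if_False; code_simp)
lemma comm_Rl: "lmm LAn (Rl t) = lmm (Rl t) LAn"
  using comm_Rl' by (cases t) auto

lemma perm2': "permokb (lmm P2 (lmm (Rl (i,j,k)) V2)) 7"
  by (induct i; induct j; induct k; simp only: Rl_def prod.case if_True if_False; code_simp)
lemma perm2: "\<forall>t. permokb (lmm P2 (lmm (Rl t) V2)) 7"
  using perm2' by auto

lemma perm3': "permokb (lmm P3 (lmm (Rl (i,j,k)) V3)) 7"
  by (induct i; induct j; induct k; simp only: Rl_def prod.case if_True if_False; code_simp)
lemma perm3: "\<forall>t. permokb (lmm P3 (lmm (Rl t) V3)) 7"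
  using perm3' by auto

lemma zero2: "zerob V2 7" by code_simp
lemma zero3: "zerob V3 7" by code_simp
lemma dual2: "dualb P2 V2 7" by code_simp
lemma dual3: "dualb P3 V3 7" by code_simp
lemma fixV2: "lmm LAn V2 = V2" by code_simp
lemma cert2: "ladd (lmm V2 P2) Psi2 = ladd lid (lmm Psi2 LAn)" by code_simp
lemma killP3: "lmm P3 LAn = P3" by code_simp
lemma cert3: "ladd lid (lmm LAn Lam3) = ladd (lmm V3 P3) Lam3" by code_simp

lemma part2: "is_perm_module G_action U_fixed_N {0}"
  unfolding is_perm_module_def
proof (rule exI, rule perm_basis_cert[where V=V2 and P=P2 and m=7])
  show "wf11 V2" "wf11 P2" "7 \<le> (11::nat)" by (simp_all add: wfs)
  show "V2 ! i ! k = 0" if "i < 11" "7 \<le> k" "k < 11" for i k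
    using zerobD[OF zero2] that .
  show "lmm P2 V2 ! j ! k = (if j = k then 1 else 0)" if "j < 7" "k < 7" for j k
    using dualbD[OF dual2] that .
  show "ivec (col k V2) \<in> U_fixed_N" if "k < 7" for k
    using that by (simp add: U_fixed_N_def An_eq mv_col wfs fixV2)
  show "dot (ivec (P2 ! j)) w = 0" if "w \<in> {0}" for w j
    using that by (simp add: dot_zero)
  show "x - ((intmat V2 :: padic2^11^11) ** intmat P2) *v x \<in> {0}" if "x \<in> U_fixed_N" for x
  proof -
    have "(intmat V2 :: padic2^11^11) ** intmat P2 + intmat Psi2 = mat 1 + intmat Psi2 ** A_n"
      using cert2 by (simp add: intmat_mult intmat_add An_eq wfs flip: intmat_lid)
    then have "((intmat V2 :: padic2^11^11) ** intmat P2 + intmat Psi2) *v x = (mat 1 + intmat Psi2 ** A_n) *v x"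
      by simp
    then show ?thesis using that
      by (simp add: U_fixed_N_def matrix_vector_mult_add_rdistrib matrix_vector_mul_assoc[symmetric])
  qed
  show "\<exists>R. wf11 R \<and> g = (\<lambda>u. (intmat R :: padic2^11^11) *v u) \<and> permok (lmm P2 (lmm R V2)) 7"
    if "g \<in> G_action" for g
    using G_action_eq[OF that] perm2 permokbD wf_Rl by blast
  show "g x \<in> U_fixed_N" if gG: "g \<in> G_action" and xU: "x \<in> U_fixed_N" for g x
  proof -
    obtain t where g: "g = (\<lambda>u. (intmat (Rl t) :: padic2^11^11) *v u)" using G_action_eq[OF gG] by blast
    have "A_n *v g x = (intmat (lmm LAn (Rl t)) :: padic2^11^11) *v x"
      by (simp add: g An_eq matrix_vector_mul_assoc intmat_mult wfs)
    also have "\<dots> = intmat (Rl t) *v (A_n *v x)"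
      by (simp add: comm_Rl An_eq matrix_vector_mul_assoc intmat_mult wfs)
    also have "\<dots> = g x" using xU by (simp add: g U_fixed_N_def)
    finally show ?thesis by (simp add: U_fixed_N_def)
  qed
qed

lemma part3: "is_perm_module G_action UNIV IN_U"
  unfolding is_perm_module_def
proof (rule exI, rule perm_basis_cert[where V=V3 and P=P3 and m=7])
  show "wf11 V3" "wf11 P3" "7 \<le> (11::nat)" by (simp_all add: wfs)
  show "V3 ! i ! k = 0" if "i < 11" "7 \<le> k" "k < 11" for i k
    using zerobD[OF zero3] that .
  show "lmm P3 V3 ! j ! k = (if j = k then 1 else 0)" if "j < 7" "k < 7" for j k
    using dualbD[OF dual3] that .
  show "ivec (col k V3) \<in> UNIV" for k by simp
  show "dot (ivec (P3 ! j)) w = 0" if wI: "w \<in> IN_U" and j7: "j < 7" for w j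
  proof -
    obtain u where w: "w = u - A_n *v u" using wI unfolding IN_U_def by blast
    show ?thesis using j7
      by (simp add: w dot_diff An_eq dot_mv_row wfs killP3)
  qed
  show "x - ((intmat V3 :: padic2^11^11) ** intmat P3) *v x \<in> IN_U" for x
  proof -
    have "mat 1 + A_n ** intmat Lam3 = (intmat V3 :: padic2^11^11) ** intmat P3 + intmat Lam3"
      using cert3 by (simp add: intmat_mult intmat_add An_eq wfs flip: intmat_lid)
    then have "(mat 1 + A_n ** intmat Lam3) *v x = ((intmat V3 :: padic2^11^11) ** intmat P3 + intmat Lam3) *v x"
      by simp
    then have "x - ((intmat V3 :: padic2^11^11) ** intmat P3) *v x = intmat Lam3 *v x - A_n *v (intmat Lam3 *v x)"
      by (simp add: matrix_vector_mult_add_rdistrib matrix_vector_mul_assoc algebra_simps)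
    then show ?thesis unfolding IN_U_def by blast
  qed
  show "\<exists>R. wf11 R \<and> g = (\<lambda>u. (intmat R :: padic2^11^11) *v u) \<and> permok (lmm P3 (lmm R V3)) 7"
    if "g \<in> G_action" for g
    using G_action_eq[OF that] perm3 permokbD wf_Rl by blast
  show "g x \<in> UNIV" for g x by simp
qed

lemma c1: "lmm LAn LAn = lid" by code_simp

lemma "A_n ** A_n = mat 1"
  by (simp add: An_eq intmat_mult wf_Ln c1 flip: intmat_lid)

lemma padic_two: "(z::padic2) + z \<noteq> 1"
proof transfer
  fix z :: "nat \<Rightarrow> int" assume "padic2_rel z z"
  show "\<not> padic2_rel (\<lambda>k. z k + z k) (\<lambda>k. 1)"
  proof
    assume "padic2_rel (\<lambda>k. z k + z k) (\<lambda>k. 1)"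
    then have "[z 1 + z 1 = 1] (mod 2 ^ 1)" unfolding padic2_rel_def by blast
    then have "(z 1 + z 1) mod 2 = 1" unfolding cong_def by simp
    then show False by presburger
  qed
qed

lemma padic_eight: "((z::padic2) + z + (z + z)) + (z + z + (z + z)) \<noteq> 1 + (1 + (1 + 1))"
proof transfer
  fix z :: "nat \<Rightarrow> int" assume "padic2_rel z z"
  show "\<not> padic2_rel (\<lambda>k. z k + z k + (z k + z k) + (z k + z k + (z k + z k))) (\<lambda>k. 1 + (1 + (1 + 1)))"
  proof
    assume "padic2_rel (\<lambda>k. z k + z k + (z k + z k) + (z k + z k + (z k + z k))) (\<lambda>k. 1 + (1 + (1 + 1)))"
    then have "[z 3 + z 3 + (z 3 + z 3) + (z 3 + z 3 + (z 3 + z 3)) = 1 + (1 + (1 + 1))] (mod 2 ^ 3)"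
      unfolding padic2_rel_def by blast
    then have "(8 * z 3) mod 8 = 4" unfolding cong_def by simp
    then show False by presburger
  qed
qed

lemma card_odd: assumes "of_nat n = (11::padic2)" shows "odd n"
proof
  assume "even n"
  then obtain m where n: "n = m + m" by (metis add_self_div_2 evenE mult_2)
  have "(of_nat m - 5 :: padic2) + (of_nat m - 5) = of_nat n - 10" by (simp add: n)
  also have "\<dots> = 1" using assms by simp
  finally show False using padic_two by blast
qed

lemma inv_parity:
  assumes "finite S" "\<And>x. x \<in> S \<Longrightarrow> f x \<in> S" "\<And>x. x \<in> S \<Longrightarrow> f (f x) = x"
  shows "odd (card S) \<longleftrightarrow> odd (card {x\<in>S. f x = x})"
  using assms
proof (induction "card S" arbitrary: S rule: less_induct)
  case less
  show ?case
  proof (cases "\<forall>x\<in>S. f x = x")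
    case True
    then have "{x\<in>S. f x = x} = S" by auto
    then show ?thesis by simp
  next
    case False
    then obtain x where x: "x \<in> S" "f x \<noteq> x" by auto
    define S' where "S' = S - {x, f x}"
    have fx: "f x \<in> S" using less.prems x by auto
    have cS: "card S' = card S - 2" unfolding S'_def using x fx less.prems(1) by (simp add: card_Diff_subset)
    have c2: "card S \<ge> 2"
    proof -
      have "card {x, f x} \<le> card S" using x fx less.prems(1) by (intro card_mono) auto
      then show ?thesis using x by simp
    qed
    have clos: "f y \<in> S'" if "y \<in> S'" for y
    proof -
      have y: "y \<in> S" "y \<noteq> x" "y \<noteq> f x" using that unfolding S'_def by auto
      have "f y \<noteq> x" using y less.prems(3) by metis
      moreover have "f y \<noteq> f x" using y less.prems(3) x(1) by metis
      ultimately show ?thesis using less.prems(2) y unfolding S'_def by auto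
    qed
    have fix_eq: "{y\<in>S'. f y = y} = {y\<in>S. f y = y}"
    proof -
      have "f (f x) \<noteq> f x" using x less.prems(3) by metis
      then show ?thesis unfolding S'_def using x by auto
    qed
    have IH: "odd (card S') \<longleftrightarrow> odd (card {y\<in>S'. f y = y})"
      using less.hyps[of S'] cS c2 less.prems clos unfolding S'_def by auto
    have "odd (card S) \<longleftrightarrow> odd (card S')" using cS c2 by auto
    then show ?thesis using IH fix_eq by simp
  qed
qed

lemma mv_scale: "(A :: padic2^11^11) *v (c *s v) = c *s (A *v v)"
  by (simp add: vec_eq_iff matrix_vector_mult_def sum_distrib_left mult.left_commute)

lemma mv_lincomb: "(A :: padic2^11^11) *v (\<Sum>v\<in>S. c v *s v) = (\<Sum>v\<in>S. c v *s (A *v v))"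
proof (cases "finite S")
  case True then show ?thesis
    by (induction S rule: finite_induct)
       (simp_all add: matrix_vector_right_distrib mv_scale)
next
  case False then show ?thesis by simp
qed

definition isbasis :: "(padic2^11) set \<Rightarrow> bool" where
  "isbasis B \<longleftrightarrow> finite B \<and> (\<forall>x. \<exists>c. x = (\<Sum>v\<in>B. c v *s v)) \<and>
     (\<forall>c v. (\<Sum>v\<in>B. c v *s v) = 0 \<longrightarrow> v \<in> B \<longrightarrow> c v = 0)"

context
  fixes B :: "(padic2^11) set"
  assumes bas: "isbasis B"
begin

lemma finB: "finite B" using bas unfolding isbasis_def by blast
lemma spanB: "\<exists>c. x = (\<Sum>v\<in>B. c v *s v)" using bas unfolding isbasis_def by blast
lemma indepB: "(\<Sum>v\<in>B. c v *s v) = 0 \<Longrightarrow> v \<in> B \<Longrightarrow> c v = 0" using bas unfolding isbasis_def by blast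

definition coef :: "padic2^11 \<Rightarrow> padic2^11 \<Rightarrow> padic2" where
  "coef x = (SOME c. x = (\<Sum>v\<in>B. c v *s v))"

lemma coef_eq: "x = (\<Sum>v\<in>B. coef x v *s v)"
  unfolding coef_def by (rule someI_ex[OF spanB])

lemma coef_uniq: assumes "x = (\<Sum>v\<in>B. d v *s v)" "v \<in> B" shows "coef x v = d v"
proof -
  have "(\<Sum>v\<in>B. (coef x v - d v) *s v) = (\<Sum>v\<in>B. coef x v *s v) - (\<Sum>v\<in>B. d v *s v)"
    by (simp add: vector_sub_rdistrib sum_subtractf)
  also have "\<dots> = 0" using coef_eq[of x] assms(1) by simp
  finally show ?thesis using indepB[of "\<lambda>v. coef x v - d v" v] assms(2) by simp
qed

lemma coef_add: "v \<in> B \<Longrightarrow> coef (x + y) v = coef x v + coef y v"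
  by (rule coef_uniq) (simp_all add: vector_sadd_rdistrib sum.distrib flip: coef_eq)

lemma coef_basis: assumes "b \<in> B" "v \<in> B" shows "coef b v = (if v = b then 1 else 0)"
proof (rule coef_uniq[OF _ assms(2)])
  have "(\<Sum>v\<in>B. (if v = b then 1 else 0) *s v) = (\<Sum>v\<in>B. if v = b then v else 0)"
    by (rule sum.cong) auto
  also have "\<dots> = b" using assms(1) finB by simp
  finally show "b = (\<Sum>v\<in>B. (if v = b then 1 else 0) *s v)" by simp
qed

lemma coef_perm:
  assumes AB: "\<And>v. v \<in> B \<Longrightarrow> A *v v \<in> B" and AA: "\<And>v. v \<in> B \<Longrightarrow> A *v (A *v v) = v" and w: "w \<in> B"
  shows "coef (A *v y) w = coef y (A *v w)"
proof (rule coef_uniq[OF _ w])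
  have bij: "bij_betw (\<lambda>v. A *v v) B B"
    by (rule bij_betw_byWitness[where f'="\<lambda>v. A *v v"]) (auto simp: AB AA)
  have "A *v y = (\<Sum>v\<in>B. coef y v *s (A *v v))"
    by (subst coef_eq[of y]) (rule mv_lincomb)
  also have "\<dots> = (\<Sum>v\<in>B. coef y (A *v (A *v v)) *s (A *v v))"
    by (rule sum.cong) (simp_all add: AA)
  also have "\<dots> = (\<Sum>u\<in>B. coef y (A *v u) *s u)"
    by (rule sum.reindex_bij_betw[OF bij, where g="\<lambda>u. coef y (A *v u) *s u"])
  finally show "A *v y = (\<Sum>u\<in>B. coef y (A *v u) *s u)" .
qed

lemma coef_lin_sum: "coef (\<Sum>i\<in>(UNIV::11 set). a i *s e i) v = (\<Sum>i\<in>UNIV. a i * coef (e i) v)" if "v \<in> B"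
proof (rule coef_uniq[OF _ that])
  have "(\<Sum>i\<in>(UNIV::11 set). a i *s e i) = (\<Sum>i\<in>UNIV. a i *s (\<Sum>v\<in>B. coef (e i) v *s v))"
    by (simp flip: coef_eq)
  also have "\<dots> = (\<Sum>v\<in>B. (\<Sum>i\<in>UNIV. a i * coef (e i) v) *s v)"
    by (simp add: vec_eq_iff sum_distrib_left sum_distrib_right mult.assoc sum.swap[of _ B])
  finally show "(\<Sum>i\<in>(UNIV::11 set). a i *s e i) = (\<Sum>v\<in>B. (\<Sum>i\<in>UNIV. a i * coef (e i) v) *s v)" .
qed

lemma card_B: "of_nat (card B) = (11::padic2)"
proof -
  have 1: "coef b b = (\<Sum>i\<in>UNIV. b $ i * coef (axis i 1) b)" if "b \<in> B" for b
    using coef_lin_sum[OF that, of "\<lambda>i. b $ i" "\<lambda>i. axis i 1"] by (simp add: basis_expansion)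
  have "of_nat (card B) = (\<Sum>b\<in>B. (1::padic2))" by simp
  also have "\<dots> = (\<Sum>b\<in>B. \<Sum>i\<in>UNIV. b $ i * coef (axis i 1) b)"
    by (rule sum.cong) (simp_all add: 1[symmetric] coef_basis)
  also have "\<dots> = (\<Sum>i\<in>UNIV. \<Sum>b\<in>B. coef (axis i 1) b * b $ i)"
    by (subst sum.swap) (simp add: mult.commute)
  also have "\<dots> = (\<Sum>i\<in>(UNIV::11 set). (\<Sum>b\<in>B. coef (axis i 1) b *s b) $ i)"
    by simp
  also have "\<dots> = (\<Sum>i\<in>(UNIV::11 set). (axis i 1 :: padic2^11) $ i)"
    by (simp flip: coef_eq)
  also have "\<dots> = 11" by simp
  finally show ?thesis .
qed

end


lemma cert4: "ladd (ladd (ladd (lmm (lmm (lmm (ladd lid LAn) (ladd lid LAb)) (ladd lid LAc)) LL) Q1) Q2) Q3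
  = ladd (ladd (ladd (ladd lid (ladd lid (ladd lid lid))) (lmm Q1 LAn)) (lmm Q2 LAb)) (lmm Q3 LAc)"
  by code_simp

lemma cert4_mat: "(((mat 1 + A_n) ** (mat 1 + A_b)) ** (mat 1 + A_c)) ** intmat LL + intmat Q1 + intmat Q2 + intmat Q3
  = (mat 1 + (mat 1 + (mat 1 + mat 1))) + intmat Q1 ** A_n + intmat Q2 ** A_b + (intmat Q3 :: padic2^11^11) ** A_c"
  using cert4 by (simp add: An_eq Ab_eq Ac_eq intmat_mult intmat_add wfs flip: intmat_lid)

lemma gen_in_G: "(\<lambda>u. A_n *v u) \<in> G_action" "(\<lambda>u. A_b *v u) \<in> G_action" "(\<lambda>u. A_c *v u) \<in> G_action"
proof -
  have "rho (True, False, False) = A_n" "rho (False, True, False) = A_b" "rho (False, False, True) = A_c"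
    by (simp_all add: rho_def)
  then show "(\<lambda>u. A_n *v u) \<in> G_action" "(\<lambda>u. A_b *v u) \<in> G_action" "(\<lambda>u. A_c *v u) \<in> G_action"
    unfolding G_action_def by (metis (mono_tags, lifting) mem_Collect_eq)+
qed

lemma part4: "\<not> is_perm_module G_action UNIV {0}"
proof
  assume "is_perm_module G_action UNIV {0}"
  then obtain B where pb: "perm_basis G_action UNIV {0} B" unfolding is_perm_module_def by blast
  note P = pb[unfolded perm_basis_def]
  have finB: "finite B" using P by (rule conjunct1)
  have P3: "\<forall>x\<in>UNIV. \<exists>y\<in>lincombs B. x - y \<in> {0}" using P by (elim conjE)
  have P4: "\<forall>S c. finite S \<and> S \<subseteq> B \<and> (\<Sum>v\<in>S. c v *s v) \<in> {0} \<longrightarrow> (\<forall>v\<in>S. c v = 0)"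
    using P by (elim conjE)
  have P5: "\<forall>g\<in>G_action. \<forall>v\<in>B. \<exists>w\<in>B. g v - w \<in> {0}" using P by (elim conjE)
  have spanB: "\<exists>c. x = (\<Sum>v\<in>B. c v *s v)" for x
  proof -
    obtain y where y: "y \<in> lincombs B" "x - y \<in> {0}" using P3 by blast
    then obtain S c where S: "finite S" "S \<subseteq> B" "y = (\<Sum>v\<in>S. c v *s v)" unfolding lincombs_def by blast
    have "(\<Sum>v\<in>B. (if v \<in> S then c v else 0) *s v) = (\<Sum>v\<in>S. c v *s v)"
      by (rule sum.mono_neutral_cong_right) (use finB S in auto)
    then have "x = (\<Sum>v\<in>B. (if v \<in> S then c v else 0) *s v)" using y(2) S(3) by simp
    then show ?thesis by (rule exI[of _ "\<lambda>v. if v \<in> S then c v else 0"])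
  qed
  have indepB: "c v = 0" if "(\<Sum>v\<in>B. c v *s v) = 0" "v \<in> B" for c v
    using P4[rule_format, of B c] that finB by simp
  have closed: "A *v v \<in> B" if gA: "(\<lambda>u. A *v u) \<in> G_action" and vB: "v \<in> B" for A v
  proof -
    obtain w where "w \<in> B" "A *v v - w \<in> {0}" using P5[rule_format, OF gA vB] by blast
    then show ?thesis by simp
  qed
  have inv: "A *v (A *v v) = v" if "A ** A = mat 1" for A :: "padic2^11^11" and v
    using that by (simp add: matrix_vector_mul_assoc)
  have clB: "\<And>v. v \<in> B \<Longrightarrow> A_n *v v \<in> B" "\<And>v. v \<in> B \<Longrightarrow> A_b *v v \<in> B" "\<And>v. v \<in> B \<Longrightarrow> A_c *v v \<in> B"
    using closed gen_in_G by blast+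
  have invs: "\<And>v. A_n *v (A_n *v v) = v" "\<And>v. A_b *v (A_b *v v) = v" "\<And>v. A_c *v (A_c *v v) = v"
    using inv part1 by blast+
  have comm: "A_n *v (A_b *v v) = A_b *v (A_n *v v)" "A_n *v (A_c *v v) = A_c *v (A_n *v v)"
      "A_b *v (A_c *v v) = A_c *v (A_b *v v)" for v
    using part1 by (simp_all add: matrix_vector_mul_assoc)
  define F1 where "F1 = {v\<in>B. A_n *v v = v}"
  define F2 where "F2 = {v\<in>F1. A_b *v v = v}"
  define F3 where "F3 = {v\<in>F2. A_c *v v = v}"
  have bas: "isbasis B" unfolding isbasis_def using finB spanB indepB by blast
  have oB: "odd (card B)" by (rule card_odd, rule card_B[OF bas])
  have fin1: "finite F1" unfolding F1_def using finB by simp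
  have fin2: "finite F2" unfolding F2_def using fin1 by simp
  have cl1: "A_b *v v \<in> F1" if "v \<in> F1" for v
    using that clB(2) comm(1) unfolding F1_def by auto
  have cl2: "A_c *v v \<in> F2" if "v \<in> F2" for v
    using that clB(3) comm(2) comm(3) unfolding F2_def F1_def by auto
  have "odd (card F1)" unfolding F1_def using inv_parity[of B "\<lambda>v. A_n *v v", OF finB clB(1) invs(1)] oB by simp
  then have "odd (card F2)" unfolding F2_def using inv_parity[of F1 "\<lambda>v. A_b *v v", OF fin1 cl1 invs(2)] by simp
  then have "odd (card F3)" unfolding F3_def using inv_parity[of F2 "\<lambda>v. A_c *v v", OF fin2 cl2 invs(3)] by simp
  then obtain x0 where x0: "x0 \<in> F3" by (metis all_not_in_conv card.empty odd_card_imp_not_empty)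
  then have x0B: "x0 \<in> B" and fn: "A_n *v x0 = x0" and fb: "A_b *v x0 = x0" and fc: "A_c *v x0 = x0"
    unfolding F3_def F2_def F1_def by auto
  note cadd = coef_add[OF bas]
  note cperm = coef_perm[OF bas]
  note cbas = coef_basis[OF bas]
  have key: "coef B ((mat 1 + A) *v z) x0 = coef B z x0 + coef B z x0"
    if "\<And>v. v \<in> B \<Longrightarrow> A *v v \<in> B" "\<And>v. v \<in> B \<Longrightarrow> A *v (A *v v) = v" "A *v x0 = x0" for A z
  proof -
    have "coef B ((mat 1 + A) *v z) x0 = coef B z x0 + coef B (A *v z) x0"
      by (simp add: matrix_vector_mult_add_rdistrib cadd x0B)
    also have "coef B (A *v z) x0 = coef B z x0" using cperm[OF that(1,2) x0B] that(3) by simp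
    finally show ?thesis .
  qed
  define y where "y = (intmat LL :: padic2^11^11) *v x0"
  define c where "c = coef B y x0"
  have Ny: "(mat 1 + A_n) *v ((mat 1 + A_b) *v ((mat 1 + A_c) *v y)) = x0 + (x0 + (x0 + x0))"
  proof -
    have h: "(mat 1 + A_n) *v ((mat 1 + A_b) *v ((mat 1 + A_c) *v y)) + intmat Q1 *v x0 + intmat Q2 *v x0 + intmat Q3 *v x0
      = (x0 + (x0 + (x0 + x0))) + intmat Q1 *v x0 + intmat Q2 *v x0 + intmat Q3 *v x0"
      using arg_cong[OF cert4_mat, of "\<lambda>M. M *v x0"] unfolding y_def
      by (simp only: matrix_vector_mult_add_rdistrib matrix_vector_mul_lid matrix_vector_mul_assoc[symmetric] fn fb fc)
    then show ?thesis by (simp only: add_right_cancel)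
  qed
  have "coef B ((mat 1 + A_n) *v ((mat 1 + A_b) *v ((mat 1 + A_c) *v y))) x0 = ((c + c) + (c + c)) + ((c + c) + (c + c))"
    using key[of A_n] key[of A_b] key[of A_c] clB invs fn fb fc unfolding c_def by simp
  moreover have "coef B (x0 + (x0 + (x0 + x0))) x0 = 1 + (1 + (1 + 1))"
    by (simp only: cadd[OF x0B] cbas[OF x0B x0B] if_True refl simp_thms)
  ultimately show False using padic_eight Ny by metis
qed

theorem mainTheorem12:
  shows "A_n ** A_n = mat 1 \<and> A_b ** A_b = mat 1 \<and> A_c ** A_c = mat 1 \<and>
         A_n ** A_b = A_b ** A_n \<and> A_n ** A_c = A_c ** A_n \<and> A_b ** A_c = A_c ** A_b \<and>
         is_perm_module G_action U_fixed_N {0} \<and>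
         is_perm_module G_action UNIV IN_U \<and>
         \<not> is_perm_module G_action UNIV {0}"
  using part1 part2 part3 part4 by blast

end
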